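(* Consider a proof-of-work blockchain using the clock-drift-adjusted tie-breaking rule based on partial PoW described in the context, adopted by all honest miners. Suppose an attacker performs a Match against post-generated block. Then, on average, the proportion $\gamma$ of honest miners (by hashrate) that mine on the attacker's chain satisfies $$\gamma \le 1 - \frac{1}{2}\exp\!\left(-\frac{\Delta_B\frac{2(1+D)^2}{(1-D)^2} + \Delta_P\frac{2}{1-D}}{T}\right).$$
   Context: Setting. $T$ is the average block generation interval of the whole network. A block header $h$ is a valid block if $H(h)<\mathit{Target}$, where $H$ is a cryptographic hash function. A partial PoW is a header with $H(h)<n\,\mathit{Target}$, where $n>1$ is a fixed difficulty adjuster. Miners publish partial PoWs when found. Every block reaches every miner less than $\Delta_B$ (real time) after publication, and every partial PoW less than $\Delta_P$ after publication. The attacker can instantly learn of and instantly deliver any message. Clock drift. The clock drift of miner $i$ is $d_i=(x_m-x_r)/x_r$, where $x_m$ is the measured and $x_r$ the actual elapsed time. There is a known $D\in(0,1)$ with $|d_i|<D$ for all miners $i$. Rule, with all durations measured on the miner's own clock. The acceptance window is $w=\Delta_B(1+D)$. A valid partial PoW is regarded as sufficiently shared once $2\Delta_B(1+D)$ has elapsed since its arrival. Each block contains a shared partial PoW, namely the XOR of the hashes of a set of partial PoWs. An honest miner uses for this set the valid partial PoWs for which $(\Delta_P + 2\Delta_B(1+D)/(1-D))(1+D)$ has elapsed since arrival. The set is transmitted with the block. Chain ties. A chain tie occurs when the predefined fork choice rule (e.g. longest chain) does not give a unique chain. A chain's arrival time is that of its head. A miner considers tied chains arriving within $w$ of the earliest-arriving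 tied chain. Each such chain gets weight $-1$ if some partial PoW in the union of its blocks' sets is not valid and sufficiently shared; otherwise its weight is the size of that union. The miner mines on a chain of maximum weight, breaking remaining ties at random. Attack. In a Match against post-generated block, the attacker withholds its generated block and publishes it when an honest miner publishes a competing block, creating a chain tie. *)

theory Defs
  imports "HOL-Probability.Probability"
begin

text \<open>
Miner i has a linear clock with constant drift d i,
   so the duration measured by miner i between real times a and e is (1 + d i) * (e - a).
 - Arrival functions have type 'p => real option (None = never arrives).
 - Delta_B, Delta_P, D are the parameters of the context; w = Delta_B * (1 + D).
\<close>

definition valid_ppow :: "('p \<Rightarrow> real) \<Rightarrow> real \<Rightarrow> real \<Rightarrow> 'p \<Rightarrow> bool" where
  "valid_ppow H n Target p \<longleftrightarrow> H p < n * Target"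

definition sufficiently_shared ::
  "('p \<Rightarrow> bool) \<Rightarrow> real \<Rightarrow> real \<Rightarrow> real \<Rightarrow> ('p \<Rightarrow> real option) \<Rightarrow> real \<Rightarrow> 'p \<Rightarrow> bool" where
  "sufficiently_shared valid dB D d arri e p \<longleftrightarrow>
     valid p \<and> (\<exists>a. arri p = Some a \<and> a \<le> e \<and> (1 + d) * (e - a) \<ge> 2 * dB * (1 + D))"

text \<open>Weight of a tied chain whose blocks' sets have union U.\<close>
definition chain_weight ::
  "('p \<Rightarrow> bool) \<Rightarrow> real \<Rightarrow> real \<Rightarrow> real \<Rightarrow> ('p \<Rightarrow> real option) \<Rightarrow> real \<Rightarrow> 'p set \<Rightarrow> real" where
  "chain_weight valid dB D d arri e U =
     (if \<forall>p\<in>U. sufficiently_shared valid dB D d arri e p then real (card U) else -1)"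

text \<open>Set of partial PoWs an honest miner (drift d, arrival function arrh) puts into
  the block it generates at real time t.\<close>
definition honest_set ::
  "('p \<Rightarrow> bool) \<Rightarrow> real \<Rightarrow> real \<Rightarrow> real \<Rightarrow> real \<Rightarrow> ('p \<Rightarrow> real option) \<Rightarrow> real \<Rightarrow> 'p set" where
  "honest_set valid dB dP D d arrh t =
     {p. valid p \<and> (\<exists>a. arrh p = Some a \<and> a \<le> t \<and>
            (1 + d) * (t - a) \<ge> (dP + 2 * dB * (1 + D) / (1 - D)) * (1 + D))}"

text \<open>Probability that an honest miner (drift d, partial-PoW arrival function arri)
  mines on the attacker's chain, when the attacker's chain head arrives at real time bA,
  the honest chain head at bH, and the unions of the chains' sets are UA and UH.\<close>
definition prob_on_attacker ::
  "('p \<Rightarrow> bool) \<Rightarrow> real \<Rightarrow> real \<Rightarrow> real \<Rightarrow> ('p \<Rightarrow> real option) \<Rightarrow> real \<Rightarrow> real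
     \<Rightarrow> 'p set \<Rightarrow> 'p set \<Rightarrow> real" where
  "prob_on_attacker valid dB D d arri bA bH UA UH =
     (let w = dB * (1 + D);
          f = min bA bH;
          e = f + w / (1 + d);
          consA = ((1 + d) * (bA - f) \<le> w);
          consH = ((1 + d) * (bH - f) \<le> w);
          wA = chain_weight valid dB D d arri e UA;
          wH = chain_weight valid dB D d arri e UH
      in if consA \<and> consH then (if wA > wH then 1 else if wA = wH then 1/2 else 0)
         else if consA then 1 else 0)"

text \<open>Proportion (by hashrate) of honest miners mining on the attacker's chain (expected
  over the random tie-breaking), when the honest competing block is generated and
  published by miner h at real time tH.  C is the union of the sets of the common
  prefix, SA the set in the attacker's block.\<close>
definition match_gamma ::
  "'m set \<Rightarrow> ('m \<Rightarrow> real) \<Rightarrow> ('m \<Rightarrow> real) \<Rightarrow> ('p \<Rightarrow> bool) \<Rightarrow> real \<Rightarrow> real \<Rightarrow> real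
    \<Rightarrow> 'p set \<Rightarrow> 'p set \<Rightarrow> 'm \<Rightarrow> real \<Rightarrow> ('m \<Rightarrow> 'p \<Rightarrow> real option)
    \<Rightarrow> ('m \<Rightarrow> real) \<Rightarrow> ('m \<Rightarrow> real) \<Rightarrow> real" where
  "match_gamma M hr drift valid dB dP D C SA h tH arr bA bH =
     (\<Sum>i\<in>M. hr i * prob_on_attacker valid dB D (drift i) (arr i) (bA i) (bH i)
                      (C \<union> SA) (C \<union> honest_set valid dB dP D (drift h) (arr h) tH))"

end

theory Submission
  imports Defs
begin

theorem lemma4:
  fixes M :: "'m set" and hr :: "'m \<Rightarrow> real" and drift :: "'m \<Rightarrow> real"
    and H :: "'p \<Rightarrow> real" and n Target :: real
    and T dB dP D alpha tA :: real
    and found :: "'p \<Rightarrow> real" and plan :: "'p \<Rightarrow> real option"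
    and SA C :: "'p set"
    and hm :: "real \<Rightarrow> 'm"
    and pub :: "real \<Rightarrow> 'p \<Rightarrow> real option"
    and arr :: "real \<Rightarrow> 'm \<Rightarrow> 'p \<Rightarrow> real option"
    and bA bH :: "real \<Rightarrow> 'm \<Rightarrow> real"
  assumes T_pos: "T > 0" and dB_pos: "dB > 0" and dP_pos: "dP > 0"
    and D_pos: "0 < D" and D_lt1: "D < 1" and n_gt1: "n > 1" and Target_pos: "Target > 0"
    and alpha: "0 \<le> alpha" "alpha < 1"
    and M_fin: "finite M" and hr_nonneg: "\<forall>i\<in>M. hr i \<ge> 0" and hr_sum: "(\<Sum>i\<in>M. hr i) = 1"
    and drift_bound: "\<forall>i\<in>M. \<bar>drift i\<bar> < D"
    and found_fin: "\<forall>t. finite {p. valid_ppow H n Target p \<and> found p \<le> t}"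
    and SA_fin: "finite SA" and C_fin: "finite C"
    and SA_found: "\<forall>p\<in>SA. valid_ppow H n Target p \<longrightarrow> found p \<le> tA"
    and plan_found: "\<forall>p t. plan p = Some t \<longrightarrow> found p \<le> t"
    and scen: "\<forall>g>0.
         hm g \<in> M
       \<and> (\<forall>p t. pub g p = Some t \<longrightarrow> found p \<le> t)
       \<and> (\<forall>p t. t < tA + g \<longrightarrow> (pub g p = Some t \<longleftrightarrow> plan p = Some t))
       \<and> (\<forall>i\<in>M. \<forall>p t. valid_ppow H n Target p \<longrightarrow> pub g p = Some t \<longrightarrow>
              (\<exists>a. arr g i p = Some a \<and> t \<le> a \<and> a < t + dP))
       \<and> (\<forall>i\<in>M. \<forall>p a. valid_ppow H n Target p \<longrightarrow> arr g i p = Some a \<longrightarrow>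
              (\<exists>t. pub g p = Some t \<and> t \<le> a))
       \<and> (\<forall>i\<in>M. tA + g \<le> bH g i \<and> bH g i < tA + g + dB
                \<and> tA + g \<le> bA g i \<and> bA g i < tA + g + dB)
       \<and> bH g (hm g) = tA + g"
    and meas: "(\<lambda>g. match_gamma M hr drift (valid_ppow H n Target) dB dP D C SA
                      (hm g) (tA + g) (arr g) (bA g) (bH g)) \<in> borel_measurable borel"
  shows "(\<integral>g. match_gamma M hr drift (valid_ppow H n Target) dB dP D C SA
                 (hm g) (tA + g) (arr g) (bA g) (bH g)
            \<partial>(density lborel (exponential_density ((1 - alpha) / T))))
         \<le> 1 - 1/2 * exp (- (dB * (2 * (1 + D)^2 / (1 - D)^2) + dP * (2 / (1 - D))) / T)"
  proof -
  define V where "V = valid_ppow H n Target"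
  define K where "K = dB * (2 * (1 + D)^2 / (1 - D)^2) + dP * (2 / (1 - D))"
  define Q where "Q = dP + 2 * dB * (1 + D) / (1 - D)"
  define lam where "lam = (1 - alpha) / T"
  define gam where "gam = (\<lambda>g. match_gamma M hr drift V dB dP D C SA
                 (hm g) (tA + g) (arr g) (bA g) (bH g))"
  define s where "s = Max ((\<lambda>q. the (plan q)) ` SA) - tA"
  define B where "B = (if SA \<noteq> {} \<and> (\<forall>q\<in>SA. plan q \<noteq> None) then {s<..<s+K} else {})"
  have lam_pos: "lam > 0" using alpha T_pos by (simp add: lam_def)
  have KQ: "K = dP + Q * (1 + D) / (1 - D)"
  proof -
    have nz: "1 - D \<noteq> 0" using D_lt1 by simp
    define r where "r = (1 + D) / (1 - D)"
    have r1: "(1 + D)^2 / (1 - D)^2 = r * r" by (simp add: r_def power_divide power2_eq_square)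
    have r2: "2 / (1 - D) = 1 + r" using nz by (simp add: r_def field_simps)
    have r3: "Q = dP + 2 * dB * r" by (simp add: Q_def r_def)
    have r4: "Q * (1 + D) / (1 - D) = Q * r" by (simp add: r_def)
    have "K = dB * 2 * (r * r) + dP * (1 + r)"
      unfolding K_def r2 times_divide_eq_right[symmetric] r1 by simp
    moreover have "dP + Q * (1 + D) / (1 - D) = dP + (dP + 2 * dB * r) * r"
      by (subst r4) (simp only: r3)
    ultimately show ?thesis by (simp add: algebra_simps)
  qed
  have K_ge: "K \<ge> dP"
  proof -
    have "Q * (1 + D) / (1 - D) \<ge> 0" using D_lt1 D_pos dP_pos dB_pos by (simp add: Q_def)
    then show ?thesis using KQ by simp
  qed
  have main: "gam g \<le> 1/2 + 1/2 * indicator B g \<and> 0 \<le> gam g" if gpos: "g > 0" for g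
  proof -
    note sc = scen[rule_format, OF gpos]
    have sc1: "hm g \<in> M" using sc by blast
    have sc2: "\<And>p t. pub g p = Some t \<Longrightarrow> found p \<le> t" using sc by blast
    have sc3: "\<And>p t. t < tA + g \<Longrightarrow> pub g p = Some t \<longleftrightarrow> plan p = Some t" using sc by blast
    have sc4: "\<And>i p t. i \<in> M \<Longrightarrow> V p \<Longrightarrow> pub g p = Some t \<Longrightarrow>
              (\<exists>a. arr g i p = Some a \<and> t \<le> a \<and> a < t + dP)" using sc by (simp add: V_def)
    have sc5: "\<And>i p a. i \<in> M \<Longrightarrow> V p \<Longrightarrow> arr g i p = Some a \<Longrightarrow>
              (\<exists>t. pub g p = Some t \<and> t \<le> a)" using sc by (simp add: V_def)
    have sc6: "\<And>i. i \<in> M \<Longrightarrow> tA + g \<le> bH g i \<and> bH g i < tA + g + dB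
                \<and> tA + g \<le> bA g i \<and> bA g i < tA + g + dB" using sc by blast
    define h where "h = hm g"
    define tH where "tH = tA + g"
    define HS where "HS = honest_set V dB dP D (drift h) (arr g h) tH"
    have hM: "h \<in> M" using sc1 by (simp add: h_def)
    have dh: "\<bar>drift h\<bar> < D" using drift_bound hM by auto
    have HS_fin: "finite HS"
    proof (rule finite_subset[OF _ found_fin[rule_format, of tH]])
      show "HS \<subseteq> {p. valid_ppow H n Target p \<and> found p \<le> tH}"
      proof
        fix p assume "p \<in> HS"
        then obtain a where v: "V p" and a: "arr g h p = Some a" "a \<le> tH"
          by (auto simp: HS_def honest_set_def)
        then obtain t where "pub g p = Some t" "t \<le> a" using sc5[OF hM v a(1)] by blast
        then have "found p \<le> t" using sc2 by auto
        then show "p \<in> {p. valid_ppow H n Target p \<and> found p \<le> tH}"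
          using v a \<open>t \<le> a\<close> by (simp add: V_def)
      qed
    qed
    have each: "0 \<le> prob_on_attacker V dB D (drift i) (arr g i) (bA g i) (bH g i) (C \<union> SA) (C \<union> HS)
           \<and> prob_on_attacker V dB D (drift i) (arr g i) (bA g i) (bH g i) (C \<union> SA) (C \<union> HS) \<le> 1
           \<and> (g \<notin> B \<longrightarrow> prob_on_attacker V dB D (drift i) (arr g i) (bA g i) (bH g i) (C \<union> SA) (C \<union> HS) \<le> 1/2)"
      if iM: "i \<in> M" for i
    proof -
      define d where "d = drift i"
      define f where "f = min (bA g i) (bH g i)"
      define w where "w = dB * (1 + D)"
      define e where "e = f + w / (1 + d)"
      define wA where "wA = chain_weight V dB D d (arr g i) e (C \<union> SA)"
      define wH where "wH = chain_weight V dB D d (arr g i) e (C \<union> HS)"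
      have dd: "\<bar>d\<bar> < D" using drift_bound iM by (auto simp: d_def)
      have d1: "1 + d > 0" "1 + d < 1 + D" "1 - D < 1 + d" using dd D_lt1 by auto
      have bb: "tA + g \<le> bH g i" "bH g i < tA + g + dB" "tA + g \<le> bA g i" "bA g i < tA + g + dB"
        using sc6[OF iM] by auto
      have consA: "(1 + d) * (bA g i - f) \<le> w"
      proof -
        have "0 \<le> bA g i - f" "bA g i - f \<le> dB" using bb by (auto simp: f_def)
        then have "(1 + d) * (bA g i - f) \<le> (1 + D) * dB"
          using d1 by (intro mult_mono) auto
        then show ?thesis by (simp add: w_def mult.commute)
      qed
      have consH: "(1 + d) * (bH g i - f) \<le> w"
      proof -
        have "0 \<le> bH g i - f" "bH g i - f \<le> dB" using bb by (auto simp: f_def)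
        then have "(1 + d) * (bH g i - f) \<le> (1 + D) * dB"
          using d1 by (intro mult_mono) auto
        then show ?thesis by (simp add: w_def mult.commute)
      qed
      have shared_plan: "\<exists>t. plan q = Some t \<and> t < tA + g \<and> pub g q = Some t"
        if shq: "sufficiently_shared V dB D d (arr g i) e q" for q
      proof -
        obtain a where v: "V q" and a: "arr g i q = Some a" "a \<le> e" "(1 + d) * (e - a) \<ge> 2 * dB * (1 + D)"
          using shq by (auto simp: sufficiently_shared_def)
        obtain t where t: "pub g q = Some t" "t \<le> a" using sc5[OF iM v a(1)] by blast
        have "(1 + d) * (e - a) = (1 + d) * (f - a) + w"
          using d1 by (simp add: e_def field_simps)
        then have fa: "(1 + d) * (f - a) \<ge> dB * (1 + D)" using a by (simp add: w_def)
        have "f - a > dB"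
        proof (rule ccontr)
          assume "\<not> f - a > dB"
          then have "f - a \<le> dB" by simp
          show False
          proof (cases "f - a \<le> 0")
            case True
            then have "(1 + d) * (f - a) \<le> 0" using d1 by (simp add: mult_nonneg_nonpos)
            then show False using fa dB_pos D_pos by (smt (verit) mult_pos_pos)
          next
            case False
            then have "(1 + d) * (f - a) < (1 + D) * (f - a)" using d1 by simp
            also have "\<dots> \<le> (1 + D) * dB" using \<open>f - a \<le> dB\<close> D_pos by simp
            finally show False using fa by (simp add: mult.commute)
          qed
        qed
        moreover have "f < tA + g + dB" using bb by (simp add: f_def)
        ultimately have "t < tA + g" using t by simp
        then have "plan q = Some t" using sc3 t by blast
        then show ?thesis using t \<open>t < tA + g\<close> by blast
      qed
      have HS_sh: "sufficiently_shared V dB D d (arr g i) e p" if pHS: "p \<in> HS" for p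
      proof -
        obtain a where v: "V p" and a: "arr g h p = Some a" "a \<le> tH"
          "(1 + drift h) * (tH - a) \<ge> Q * (1 + D)"
          using pHS by (auto simp: HS_def honest_set_def Q_def)
        obtain t where t: "pub g p = Some t" "t \<le> a" using sc5[OF hM v a(1)] by blast
        obtain a' where a': "arr g i p = Some a'" "t \<le> a'" "a' < t + dP"
          using sc4[OF iM v t(1)] by blast
        have Qp: "Q > 0"
        proof -
          have "2 * dB * (1 + D) / (1 - D) \<ge> 0" using dB_pos D_pos D_lt1 by simp
          then show ?thesis using dP_pos by (simp add: Q_def)
        qed
        have "tH - a > Q"
        proof (rule ccontr)
          assume "\<not> tH - a > Q"
          then have le: "tH - a \<le> Q" by simp
          show False
          proof (cases "tH - a = 0")
            case True
            have "Q * (1 + D) > 0" using Qp D_pos by simp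
            then show False using a(3) True by simp
          next
            case False
            then have pos: "tH - a > 0" using a(2) by simp
            have "1 + drift h < 1 + D" using dh by simp
            then have "(1 + drift h) * (tH - a) < (1 + D) * (tH - a)"
              using pos by (simp add: mult_strict_right_mono)
            also have "\<dots> \<le> (1 + D) * Q" using le D_pos by (simp add: mult_left_mono)
            finally show False using a(3) by (simp add: mult.commute)
          qed
        qed
        have "w / (1 + d) \<ge> 0" using d1 dB_pos D_pos by (simp add: w_def)
        then have ef: "e \<ge> tH" using bb by (simp add: e_def f_def tH_def)
        have ea: "e - a' > 2 * dB * (1 + D) / (1 - D)"
          using \<open>tH - a > Q\<close> ef a' t by (simp add: Q_def)
        have c0: "2 * dB * (1 + D) / (1 - D) \<ge> 0" using dB_pos D_pos D_lt1 by simp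
        have "(1 + d) * (e - a') \<ge> (1 - D) * (e - a')"
          using d1 ea c0 by (intro mult_right_mono) auto
        moreover have "(1 - D) * (e - a') \<ge> 2 * dB * (1 + D)"
          using ea D_lt1 by (simp add: field_simps)
        ultimately have "(1 + d) * (e - a') \<ge> 2 * dB * (1 + D)" by simp
        moreover have "a' \<le> e" using ea c0 by simp
        ultimately show ?thesis using v a' by (auto simp: sufficiently_shared_def)
      qed
      have key: "g \<in> B" if gt: "wA > wH"
      proof -
        have wHge: "wH \<ge> -1" by (simp add: wH_def chain_weight_def)
        have allA: "\<forall>q\<in>C \<union> SA. sufficiently_shared V dB D d (arr g i) e q"
          using gt wHge by (auto simp: wA_def chain_weight_def split: if_splits)
        then have wAe: "wA = real (card (C \<union> SA))" by (simp add: wA_def chain_weight_def)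
        have "\<forall>q\<in>C \<union> HS. sufficiently_shared V dB D d (arr g i) e q"
          using allA HS_sh by auto
        then have wHe: "wH = real (card (C \<union> HS))" by (simp add: wH_def chain_weight_def)
        have "\<not> SA \<subseteq> HS"
        proof
          assume "SA \<subseteq> HS"
          then have "card (C \<union> SA) \<le> card (C \<union> HS)"
            using HS_fin C_fin by (intro card_mono) auto
          then show False using gt wAe wHe by simp
        qed
        then obtain p where pSA: "p \<in> SA" and pHS: "p \<notin> HS" by auto
        have plq: "\<forall>q\<in>SA. \<exists>t. plan q = Some t \<and> t < tA + g \<and> pub g q = Some t"
          using allA shared_plan by auto
        obtain tp where tp: "plan p = Some tp" "tp < tA + g" "pub g p = Some tp"
          using plq pSA by blast
        have vp: "V p" using allA pSA by (auto simp: sufficiently_shared_def)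
        obtain ah where ah: "arr g h p = Some ah" "tp \<le> ah" "ah < tp + dP"
          using sc4[OF hM vp tp(3)] by blast
        have nh: "\<not> (ah \<le> tH \<and> (1 + drift h) * (tH - ah) \<ge> Q * (1 + D))"
          using pHS vp ah by (auto simp: HS_def honest_set_def Q_def)
        have gK: "g < tp - tA + K"
        proof (cases "ah \<le> tH")
          case False
          then show ?thesis using ah K_ge by (simp add: tH_def)
        next
          case True
          then have lt: "(1 + drift h) * (tH - ah) < Q * (1 + D)" using nh by simp
          have "(1 - D) * (tH - ah) \<le> (1 + drift h) * (tH - ah)"
            using True dh by (intro mult_right_mono) auto
          then have "(1 - D) * (tH - ah) < Q * (1 + D)" using lt by simp
          then have "tH - ah < Q * (1 + D) / (1 - D)" using D_lt1 by (simp add: field_simps)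
          then show ?thesis using KQ ah by (simp add: tH_def)
        qed
        have SAne: "SA \<noteq> {}" using pSA by auto
        have plnn: "\<forall>q\<in>SA. plan q \<noteq> None" using plq by auto
        have Mx: "Max ((\<lambda>q. the (plan q)) ` SA) \<in> (\<lambda>q. the (plan q)) ` SA"
          using SAne SA_fin by (intro Max_in) auto
        then obtain q where qSA: "q \<in> SA" and qM: "Max ((\<lambda>q. the (plan q)) ` SA) = the (plan q)" by auto
        have "s < g" using plq qSA qM by (auto simp: s_def)
        moreover have "tp \<le> Max ((\<lambda>q. the (plan q)) ` SA)"
          using SA_fin pSA tp by (metis Max_ge finite_imageI image_eqI option.sel)
        ultimately have "g \<in> {s<..<s+K}" using gK by (simp add: s_def)
        then show ?thesis using SAne plnn by (simp add: B_def)
      qed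
      have P: "prob_on_attacker V dB D d (arr g i) (bA g i) (bH g i) (C \<union> SA) (C \<union> HS)
            = (if wA > wH then 1 else if wA = wH then 1/2 else 0)"
        using consA consH
        by (simp add: prob_on_attacker_def Let_def wA_def wH_def e_def f_def w_def)
      show ?thesis using key P by (auto simp: d_def)
    qed
    have gam_eq: "gam g = (\<Sum>i\<in>M. hr i * prob_on_attacker V dB D (drift i) (arr g i) (bA g i) (bH g i) (C \<union> SA) (C \<union> HS))"
      by (simp add: gam_def match_gamma_def HS_def h_def tH_def)
    have ge0: "0 \<le> gam g" unfolding gam_eq
      using each hr_nonneg by (intro sum_nonneg) auto
    have le1: "gam g \<le> 1"
    proof -
      have "gam g \<le> (\<Sum>i\<in>M. hr i * 1)" unfolding gam_eq
        using each hr_nonneg by (intro sum_mono mult_left_mono) auto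
      then show ?thesis using hr_sum by simp
    qed
    have le12: "gam g \<le> 1/2" if "g \<notin> B"
    proof -
      have "gam g \<le> (\<Sum>i\<in>M. hr i * (1/2))" unfolding gam_eq
        using each hr_nonneg that by (intro sum_mono mult_left_mono) auto
      then show ?thesis using hr_sum by (simp add: sum_divide_distrib[symmetric])
    qed
    show ?thesis using ge0 le1 le12 by (cases "g \<in> B") auto
  qed
  define N where "N = density lborel (exponential_density lam)"
  have ps: "prob_space N" unfolding N_def using lam_pos by (rule prob_space_exponential_density)
  interpret P: prob_space N by (rule ps)
  have sN: "sets N = sets borel" by (simp add: N_def)
  have spN: "space N = UNIV" by (simp add: N_def)
  have K_pos: "K \<ge> 0" using K_ge dP_pos by simp
  have cdf: "measure N {..a} = erlang_CDF 0 lam a" for a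
  proof -
    have "emeasure N {..a} = ennreal (erlang_CDF 0 lam a)"
      unfolding N_def using lam_pos by (rule emeasure_erlang_density)
    then show ?thesis using lam_pos by (simp add: measure_def)
  qed
  have B_sets: "B \<in> sets N" by (simp add: sN B_def)
  have mB: "measure N B \<le> 1 - exp (- lam * K)"
  proof (cases "SA \<noteq> {} \<and> (\<forall>q\<in>SA. plan q \<noteq> None)")
    case False
    then have "B = {}" unfolding B_def by (simp only: if_False)
    moreover have "exp (- lam * K) \<le> 1" using lam_pos K_pos by simp
    ultimately show ?thesis by simp
  next
    case True
    then have Beq: "B = {s<..<s+K}" by (simp add: B_def)
    have "B \<subseteq> {..s+K} - {..s}" using Beq by auto
    then have "measure N B \<le> measure N ({..s+K} - {..s})"
    proof (rule P.finite_measure_mono)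
      show "{..s+K} - {..s} \<in> sets N" unfolding sN by (intro sets.Diff) auto
    qed
    also have "\<dots> = measure N {..s+K} - measure N {..s}"
      using K_pos by (intro measure_Diff) (auto simp: sN)
    also have "\<dots> = erlang_CDF 0 lam (s+K) - erlang_CDF 0 lam s" by (simp add: cdf)
    also have "\<dots> \<le> 1 - exp (- lam * K)"
    proof (cases "s \<ge> 0")
      case True
      have "exp (- lam * s) - exp (- lam * (s + K)) = exp (- lam * s) * (1 - exp (- lam * K))"
        by (simp add: algebra_simps exp_add[symmetric])
      also have "\<dots> \<le> 1 * (1 - exp (- lam * K))"
        using True lam_pos K_pos by (intro mult_right_mono) auto
      finally show ?thesis using True K_pos by (simp add: erlang_CDF_0)
    next
      case False
      show ?thesis
      proof (cases "s + K \<ge> 0")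
        case True
        have "exp (- lam * K) \<le> exp (- lam * (s + K))" using False lam_pos by simp
        then show ?thesis using True False by (simp add: erlang_CDF_0)
      next
        case F2: False
        have "exp (- lam * K) \<le> 1" using lam_pos K_pos by simp
        then show ?thesis using F2 False by (simp add: erlang_CDF_0)
      qed
    qed
    finally show ?thesis .
  qed
  have AEpos: "AE g in N. g > 0"
  proof (rule AE_I'[of "{..0}"])
    show "{..0::real} \<in> null_sets N"
      using cdf[of 0] by (intro null_setsI) (auto simp: sN measure_def erlang_CDF_0 N_def emeasure_erlang_density lam_pos)
    show "{x \<in> space N. \<not> 0 < x} \<subseteq> {..0}" by auto
  qed
  define u :: "real \<Rightarrow> real" where "u = (\<lambda>g. 1/2 + 1/2 * indicator B g)"
  have AEle: "AE g in N. gam g \<le> u g" using AEpos main by (auto simp: u_def)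
  have AEu: "AE g in N. 0 \<le> u g" by (simp add: u_def)
  have finB: "emeasure N B < \<top>" using P.emeasure_finite[of B] top.not_eq_extremum by blast
  have int_u: "integrable N u" unfolding u_def
    using B_sets by (intro Bochner_Integration.integrable_add Bochner_Integration.integrable_mult_right integrable_real_indicator) (auto simp: finB)
  have "integral\<^sup>L N gam \<le> integral\<^sup>L N u" by (rule integral_mono_AE'[OF int_u AEle AEu])
  also have "integral\<^sup>L N u = 1/2 + 1/2 * measure N B"
  proof -
    have i1: "integrable N (\<lambda>g. 1/2 * indicator B g :: real)"
      using B_sets finB by (intro Bochner_Integration.integrable_mult_right integrable_real_indicator) auto
    have i0: "integrable N (\<lambda>g. 1/2 :: real)" by simp
    have pU: "measure N UNIV = 1" using P.prob_space spN by simp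
    have "integral\<^sup>L N u = integral\<^sup>L N (\<lambda>g. 1/2 :: real) + integral\<^sup>L N (\<lambda>g. 1/2 * indicator B g :: real)"
      unfolding u_def by (rule Bochner_Integration.integral_add[OF i0 i1])
    then show ?thesis using pU B_sets by (simp add: spN)
  qed
  also have "\<dots> \<le> 1/2 + 1/2 * (1 - exp (- lam * K))" using mB by simp
  also have "\<dots> \<le> 1 - 1/2 * exp (- K / T)"
  proof -
    have "lam * K \<le> K / T" using alpha T_pos K_pos
      by (simp add: lam_def field_simps mult_right_le_one_le)
    then have "exp (- K / T) \<le> exp (- lam * K)" by simp
    then show ?thesis by (simp add: field_simps)
  qed
  finally show ?thesis by (simp add: N_def gam_def V_def K_def lam_def)
qed

end
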